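(* Let $(G,I,O)$ be a geometry with $n = \lvert V(G)\rvert$ and $k = \lvert O \rvert$. If $(G,I,O)$ has a causal flow, then $\lvert E(G)\rvert \le kn - \binom{k+1}{2}$. Moreover, for any $n \ge k \ge 1$ and any integer partition $n_1 \le n_2 \le \cdots \le n_k$ of $n$ into positive parts, the geometry $(G,I,O)$ with $G = G(n_1,\ldots,n_k)$, $I = \{v_{i,1}\}_{i=1}^k$ and $O = \{v_{i,n_i}\}_{i=1}^k$ has a causal flow and satisfies $\lvert E(G)\rvert = kn - \binom{k+1}{2}$.
   Context: A geometry is a triple $(G,I,O)$ where $G$ is a finite simple undirected graph and $I, O \subseteq V(G)$ (not necessarily disjoint). Write $O^{\mathsf c} = V(G)\setminus O$, $I^{\mathsf c} = V(G) \setminus I$, and $x \sim y$ for adjacency in $G$. A causal flow on $(G,I,O)$ is a pair $(f,\preceq)$ with a function $f: O^{\mathsf c} \to I^{\mathsf c}$ and a partial order $\preceq$ on $V(G)$ such that for all $x \in O^{\mathsf c}$ and $y \in V(G)$: (1) $x \sim f(x)$; (2) $x \preceq f(x)$; (3) if $y \sim f(x)$ then $x \preceq y$. The graph $G(n_1,\ldots,n_k)$: for each $1 \le i \le k$ it contains a path $v_{i,1} v_{i,2} \cdots v_{i,n_i}$ on $n_i$ new vertices (edges $v_{i,a}v_{i,a+1}$ for $1 \le a < n_i$), and additionally, for each $1 \le i < j \le k$, the following edges: (i) if $n_i > 1$, the edge $v_{i,a}v_{j,a}$ for each $1 \le a < n_i$; (ii) if $n_j > 1$, the edge $v_{i,a+1}v_{j,a}$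 for each $1 \le a < n_i$; (iii) the edge $v_{i,n_i}v_{j,a}$ for each $n_i \le a \le n_j$. *)

theory Defs
  imports Main
begin

definition simple_graph :: "'a set \<Rightarrow> 'a rel \<Rightarrow> bool" where
  "simple_graph V E \<longleftrightarrow> finite V \<and> E \<subseteq> V \<times> V \<and> sym E \<and> (\<forall>x. (x, x) \<notin> E)"

definition edge_set :: "'a rel \<Rightarrow> 'a set set" where
  "edge_set E = {{x, y} | x y. (x, y) \<in> E}"

definition geometry :: "'a set \<Rightarrow> 'a rel \<Rightarrow> 'a set \<Rightarrow> 'a set \<Rightarrow> bool" where
  "geometry V E Inp Out \<longleftrightarrow> simple_graph V E \<and> Inp \<subseteq> V \<and> Out \<subseteq> V"

definition is_causal_flow ::
  "'a set \<Rightarrow> 'a rel \<Rightarrow> 'a set \<Rightarrow> 'a set \<Rightarrow> ('a \<Rightarrow> 'a) \<Rightarrow> 'a rel \<Rightarrow> bool" where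
  "is_causal_flow V E Inp Out f R \<longleftrightarrow>
     partial_order_on V R \<and>
     (\<forall>x \<in> V - Out. f x \<in> V - Inp) \<and>
     (\<forall>x \<in> V - Out. \<forall>y \<in> V.
        (x, f x) \<in> E \<and> (x, f x) \<in> R \<and> ((y, f x) \<in> E \<longrightarrow> (x, y) \<in> R))"

definition has_causal_flow :: "'a set \<Rightarrow> 'a rel \<Rightarrow> 'a set \<Rightarrow> 'a set \<Rightarrow> bool" where
  "has_causal_flow V E Inp Out \<longleftrightarrow> (\<exists>f R. is_causal_flow V E Inp Out f R)"

text \<open>The graph G(n_1,...,n_k): vertex v_{i,a} is the pair (i,a), 1 \<le> i \<le> k, 1 \<le> a \<le> n i.\<close>
definition gn_vertices :: "nat \<Rightarrow> (nat \<Rightarrow> nat) \<Rightarrow> (nat \<times> nat) set" where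
  "gn_vertices k n = {(i, a). 1 \<le> i \<and> i \<le> k \<and> 1 \<le> a \<and> a \<le> n i}"

text \<open>The listed edges, each as an ordered pair (one orientation).\<close>
definition gn_dir :: "nat \<Rightarrow> (nat \<Rightarrow> nat) \<Rightarrow> ((nat \<times> nat) \<times> (nat \<times> nat)) set" where
  "gn_dir k n =
     {((i, a), (i, a + 1)) | i a. 1 \<le> i \<and> i \<le> k \<and> 1 \<le> a \<and> a < n i}
   \<union> {((i, a), (j, a)) | i j a. 1 \<le> i \<and> i < j \<and> j \<le> k \<and> n i > 1 \<and> 1 \<le> a \<and> a < n i}
   \<union> {((i, a + 1), (j, a)) | i j a. 1 \<le> i \<and> i < j \<and> j \<le> k \<and> n j > 1 \<and> 1 \<le> a \<and> a < n i}
   \<union> {((i, n i), (j, a)) | i j a. 1 \<le> i \<and> i < j \<and> j \<le> k \<and> n i \<le> a \<and> a \<le> n j}"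

definition gn_adj :: "nat \<Rightarrow> (nat \<Rightarrow> nat) \<Rightarrow> ((nat \<times> nat) \<times> (nat \<times> nat)) set" where
  "gn_adj k n = gn_dir k n \<union> (gn_dir k n)\<inverse>"

definition gn_inputs :: "nat \<Rightarrow> (nat \<times> nat) set" where
  "gn_inputs k = {(i, 1) | i. 1 \<le> i \<and> i \<le> k}"

definition gn_outputs :: "nat \<Rightarrow> (nat \<Rightarrow> nat) \<Rightarrow> (nat \<times> nat) set" where
  "gn_outputs k n = {(i, n i) | i. 1 \<le> i \<and> i \<le> k}"

end

theory Submission
  imports Defs
begin

lemma edge_set_image: "edge_set E = (\<lambda>(a,b). {a,b}) ` E"
  unfolding edge_set_def by auto




lemma finite_minimal:
  assumes "finite V" "V \<noteq> {}" "trans R" "antisym R"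
  shows "\<exists>x\<in>V. \<forall>z\<in>V. (z,x)\<in>R \<longrightarrow> z = x"
  using assms(1,2)
proof (induction V rule: finite_ne_induct)
  case (singleton x) then show ?case by auto
next
  case (insert a F)
  then obtain m where m: "m \<in> F" "\<forall>z\<in>F. (z,m)\<in>R \<longrightarrow> z = m" by auto
  show ?case
  proof (cases "(a,m) \<in> R")
    case True
    have "\<forall>z\<in>insert a F. (z,a)\<in>R \<longrightarrow> z = a"
    proof (intro ballI impI)
      fix z assume z: "z \<in> insert a F" "(z,a) \<in> R"
      show "z = a"
      proof (cases "z = a")
        case False
        then have "z \<in> F" using z by auto
        have "(z,m) \<in> R" using z True assms(3) by (meson transE)
        then have "z = m" using m \<open>z \<in> F\<close> by auto
        then show ?thesis using z True assms(4) by (meson antisymD)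
      qed
    qed
    then show ?thesis by auto
  next
    case False
    then show ?thesis using m by auto
  qed
qed

lemma part1:
  assumes "finite V" "E \<subseteq> V \<times> V" "sym E" "\<forall>x. (x,x) \<notin> E" "Out \<subseteq> V" "trans R" "antisym R"
    "\<forall>x\<in>V-Out. f x \<in> V \<and> (x, f x) \<in> E \<and> (x, f x) \<in> R \<and> (\<forall>y\<in>V. (y, f x) \<in> E \<longrightarrow> (x,y)\<in>R)"
  shows "int (card (edge_set E)) \<le> int (card Out) * int (card V) - int (Suc (card Out) choose 2)"
  using assms
proof (induction "card V" arbitrary: V E Out)
  case 0
  then have "V = {}" by auto
  then have "E = {}" "Out = {}" using 0 by auto
  then show ?case by (simp add: edge_set_def)
next
  case (Suc n)
  note hyp = Suc.prems(8)
  have "V \<noteq> {}" using Suc.hyps(2) by auto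
  then obtain x where x: "x \<in> V" "\<forall>z\<in>V. (z,x)\<in>R \<longrightarrow> z = x"
    using finite_minimal[OF Suc.prems(1) _ Suc.prems(6,7)] by auto
  have xni: "x \<notin> f ` (V - Out)"
  proof
    assume "x \<in> f ` (V - Out)"
    then obtain z where z: "z \<in> V - Out" "x = f z" by auto
    then have "(z,x) \<in> R" using hyp by auto
    then have "z = x" using x z by auto
    then show False using z hyp Suc.prems(4) by force
  qed
  have inj: "inj_on f (V - Out)"
  proof (rule inj_onI)
    fix a b assume ab: "a \<in> V - Out" "b \<in> V - Out" "f a = f b"
    have e1: "(a, f b) \<in> E" "(b, f a) \<in> E" using hyp ab by (metis DiffI DiffD1 DiffD2)+
    have "(b,a) \<in> R" using hyp ab(1,2) e1(1) by blast
    moreover have "(a,b) \<in> R" using hyp ab(1,2) e1(2) by blast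
    ultimately show "a = b" using Suc.prems(7) by (meson antisymD)
  qed
  define V' where "V' = V - {x}"
  define E' where "E' = E \<inter> (V' \<times> V')"
  define N where "N = {y. (x,y) \<in> E}"
  have cV: "card V = Suc (card V')" unfolding V'_def using x Suc.prems(1)
    by (metis Suc.hyps(2) card_Diff_singleton diff_Suc_1)
  have cV': "card V' = n" using cV Suc.hyps(2) by auto
  have finV': "finite V'" using Suc.prems(1) V'_def by auto
  have finE': "finite E'" using finV' E'_def by (simp add: finite_subset)
  have fes: "finite (edge_set E')" unfolding edge_set_image using finE' by simp
  have finN: "finite N" proof -
    have "N \<subseteq> V" using Suc.prems(2) N_def by auto
    then show ?thesis using Suc.prems(1) finite_subset by auto
  qed
  have esub: "edge_set E \<subseteq> edge_set E' \<union> (\<lambda>y. {x,y}) ` N"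
  proof
    fix e assume "e \<in> edge_set E"
    then obtain a b where ab: "e = {a,b}" "(a,b) \<in> E" unfolding edge_set_def by auto
    show "e \<in> edge_set E' \<union> (\<lambda>y. {x,y}) ` N"
    proof (cases "a = x \<or> b = x")
      case True
      then show ?thesis
      proof
        assume "a = x" then show ?thesis using ab N_def by auto
      next
        assume "b = x" then have "(x,a) \<in> E" using ab Suc.prems(3) by (meson symD)
        then show ?thesis using ab N_def \<open>b = x\<close> by auto
      qed
    next
      case False
      then have "(a,b) \<in> E'" using ab Suc.prems(2) E'_def V'_def by auto
      then show ?thesis using ab edge_set_def by auto
    qed
  qed
  have ce: "card (edge_set E) \<le> card (edge_set E') + card N"
  proof -
    have "card (edge_set E) \<le> card (edge_set E' \<union> (\<lambda>y. {x,y}) ` N)"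
      using esub fes finN by (intro card_mono) auto
    also have "\<dots> \<le> card (edge_set E') + card ((\<lambda>y. {x,y}) ` N)" by (rule card_Un_le)
    also have "\<dots> \<le> card (edge_set E') + card N" using card_image_le[OF finN] by simp
    finally show ?thesis .
  qed
  have E'sub: "E' \<subseteq> V' \<times> V'" using E'_def by auto
  have symE': "sym E'" using Suc.prems(3) unfolding E'_def sym_def by auto
  have irrE': "\<forall>x. (x,x) \<notin> E'" using Suc.prems(4) E'_def by auto
  show ?case
  proof (cases "x \<in> Out")
    case True
    define Out' where "Out' = Out - {x}"
    have O'sub: "Out' \<subseteq> V'" using Suc.prems(5) Out'_def V'_def by auto
    have hyp': "\<forall>y\<in>V'-Out'. f y \<in> V' \<and> (y, f y) \<in> E' \<and> (y, f y) \<in> R \<and> (\<forall>w\<in>V'. (w, f y) \<in> E' \<longrightarrow> (y,w)\<in>R)"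
    proof
      fix y assume y: "y \<in> V' - Out'"
      then have y1: "y \<in> V - Out" using True Out'_def V'_def by auto
      have "f y \<noteq> x" using xni y1 by force
      then show "f y \<in> V' \<and> (y, f y) \<in> E' \<and> (y, f y) \<in> R \<and> (\<forall>w\<in>V'. (w, f y) \<in> E' \<longrightarrow> (y,w)\<in>R)"
        using hyp y1 y V'_def E'_def by auto
    qed
    have IH: "int (card (edge_set E')) \<le> int (card Out') * int (card V') - int (Suc (card Out') choose 2)"
      using Suc.hyps(1)[OF cV'[symmetric] finV' E'sub symE' irrE' O'sub Suc.prems(6,7) hyp'] .
    have cO: "card Out = Suc (card Out')" using True Out'_def Suc.prems(1,5)
      by (metis card_Suc_Diff1 finite_subset)
    have cN: "card N \<le> card V'"
      using Suc.prems(2,4) N_def V'_def finV' by (intro card_mono) auto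
    have ch: "Suc (Suc (card Out')) choose 2 = Suc (card Out') + (Suc (card Out') choose 2)"
      by (simp add: numeral_2_eq_2)
    show ?thesis using ce IH cN unfolding cO cV ch by (simp add: algebra_simps)
  next
    case False
    have O'sub: "Out \<subseteq> V'" using Suc.prems(5) False V'_def by auto
    have hyp': "\<forall>y\<in>V'-Out. f y \<in> V' \<and> (y, f y) \<in> E' \<and> (y, f y) \<in> R \<and> (\<forall>w\<in>V'. (w, f y) \<in> E' \<longrightarrow> (y,w)\<in>R)"
    proof
      fix y assume y: "y \<in> V' - Out"
      then have y1: "y \<in> V - Out" using V'_def by auto
      have "f y \<noteq> x" using xni y1 by force
      then show "f y \<in> V' \<and> (y, f y) \<in> E' \<and> (y, f y) \<in> R \<and> (\<forall>w\<in>V'. (w, f y) \<in> E' \<longrightarrow> (y,w)\<in>R)"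
        using hyp y1 y V'_def E'_def by auto
    qed
    have IH: "int (card (edge_set E')) \<le> int (card Out) * int (card V') - int (Suc (card Out) choose 2)"
      using Suc.hyps(1)[OF cV'[symmetric] finV' E'sub symE' irrE' O'sub Suc.prems(6,7) hyp'] .
    define M where "M = V - f ` (V - Out)"
    have fsub: "f ` (V - Out) \<subseteq> V" using hyp by auto
    have cimg: "card (f ` (V - Out)) = card V - card Out"
      using card_image[OF inj] Suc.prems(1,5) by (simp add: card_Diff_subset finite_subset)
    have cM: "card M = card Out"
    proof -
      have "card M = card V - card (f ` (V - Out))" unfolding M_def
        using fsub Suc.prems(1) by (simp add: card_Diff_subset finite_subset)
      also have "\<dots> = card Out" using cimg Suc.prems(1,5) card_mono by (metis diff_diff_cancel)
      finally show ?thesis .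
    qed
    have xM: "x \<in> M" using x xni M_def by auto
    have NM: "N \<subseteq> insert (f x) (M - {x})"
    proof
      fix y assume y: "y \<in> N"
      then have yV: "y \<in> V" "y \<noteq> x" using N_def Suc.prems(2,4) by auto
      show "y \<in> insert (f x) (M - {x})"
      proof (cases "y \<in> f ` (V - Out)")
        case True
        then obtain z where z: "z \<in> V - Out" "y = f z" by auto
        then have "(z,x) \<in> R" using hyp y N_def x by auto
        then have "z = x" using x z by auto
        then show ?thesis using z by auto
      qed (use yV M_def in auto)
    qed
    have cN: "card N \<le> card Out"
    proof -
      have fM: "finite M" using M_def Suc.prems(1) by auto
      have "card N \<le> card (insert (f x) (M - {x}))" using NM fM by (intro card_mono) auto
      also have "\<dots> \<le> Suc (card (M - {x}))" using fM by (simp add: card_insert_if)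
      also have "\<dots> = card M" using xM fM by (metis card_Suc_Diff1)
      finally show ?thesis using cM by simp
    qed
    show ?thesis using ce IH cN unfolding cV by (simp add: algebra_simps)
  qed
qed




lemma dir_lex: "(u,v) \<in> gn_dir k p \<Longrightarrow> fst u < fst v \<or> (fst u = fst v \<and> snd u < snd v)"
  unfolding gn_dir_def by auto

lemma card_edge_adj: "card (edge_set (gn_adj k p)) = card (gn_dir k p)"
proof -
  let ?D = "gn_dir k p"
  have "edge_set (gn_adj k p) = (\<lambda>(a,b). {a,b}) ` ?D"
    unfolding edge_set_image gn_adj_def by (auto simp: image_Un insert_commute)
  moreover have "inj_on (\<lambda>(a,b). {a,b}) ?D"
  proof (rule inj_onI, clarify)
    fix a b c d assume h: "(a,b) \<in> ?D" "(c,d) \<in> ?D" "{a,b} = {c,d}"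
    from dir_lex[OF h(1)] dir_lex[OF h(2)] h(3) show "a = c \<and> b = d"
      by (metis doubleton_eq_iff less_asym less_irrefl)
  qed
  ultimately show ?thesis by (simp add: card_image)
qed

definition new_edges :: "nat \<Rightarrow> (nat \<Rightarrow> nat) \<Rightarrow> ((nat \<times> nat) \<times> (nat \<times> nat)) set" where
  "new_edges j p =
     {((j, a), (j, a + 1)) | a. 1 \<le> a \<and> a < p j}
   \<union> {((i, a), (j, a)) | i a. 1 \<le> i \<and> i < j \<and> p i > 1 \<and> 1 \<le> a \<and> a < p i}
   \<union> {((i, a + 1), (j, a)) | i a. 1 \<le> i \<and> i < j \<and> p j > 1 \<and> 1 \<le> a \<and> a < p i}
   \<union> {((i, p i), (j, a)) | i a. 1 \<le> i \<and> i < j \<and> p i \<le> a \<and> a \<le> p j}"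

lemma dir_Suc: "gn_dir (Suc k) p = gn_dir k p \<union> new_edges (Suc k) p"
  unfolding gn_dir_def new_edges_def by (auto simp: less_Suc_eq le_Suc_eq)

lemma dir_new_disj: "gn_dir k p \<inter> new_edges (Suc k) p = {}"
  unfolding gn_dir_def new_edges_def by auto

definition cross :: "nat \<Rightarrow> nat \<Rightarrow> (nat \<Rightarrow> nat) \<Rightarrow> ((nat \<times> nat) \<times> (nat \<times> nat)) set" where
  "cross i j p = (\<lambda>a. ((i,a),(j,a))) ` {1..<p i} \<union> (\<lambda>a. ((i,a+1),(j,a))) ` {1..<p i}
     \<union> (\<lambda>a. ((i,p i),(j,a))) ` {p i..p j}"

lemma new_split:
  assumes "\<forall>i\<in>{1..<j}. p i \<le> p j"
  shows "new_edges j p = (\<lambda>a. ((j, a), (j, a + 1))) ` {1..<p j} \<union> (\<Union>i\<in>{1..<j}. cross i j p)"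
  unfolding new_edges_def cross_def using assms by fastforce

lemma card_cross:
  assumes "1 \<le> p i" "p i \<le> p j"
  shows "card (cross i j p) = p i + p j - 1"
proof -
  let ?A = "(\<lambda>a. ((i,a),(j,a))) ` {1..<p i}"
  let ?B = "(\<lambda>a. ((i,a+1),(j,a))) ` {1..<p i}"
  let ?C = "(\<lambda>a. ((i,p i),(j,a))) ` {p i..p j}"
  have cA: "card ?A = p i - 1" by (subst card_image) (auto simp: inj_on_def)
  have cB: "card ?B = p i - 1" by (subst card_image) (auto simp: inj_on_def)
  have cC: "card ?C = p j + 1 - p i" by (subst card_image) (auto simp: inj_on_def)
  have d1: "?A \<inter> ?B = {}" by auto
  have d2: "(?A \<union> ?B) \<inter> ?C = {}" by auto
  have "card (cross i j p) = card (?A \<union> ?B) + card ?C"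
    unfolding cross_def using d2 by (intro card_Un_disjoint) auto
  also have "card (?A \<union> ?B) = card ?A + card ?B" using d1 by (intro card_Un_disjoint) auto
  finally show ?thesis using cA cB cC assms by simp
qed



lemma card_new:
  assumes "\<forall>i\<in>{1..<j}. 1 \<le> p i \<and> p i \<le> p j"
  shows "card (new_edges j p) = (p j - 1) + (\<Sum>i\<in>{1..<j}. p i + p j - 1)"
proof -
  have ns: "new_edges j p = (\<lambda>a. ((j, a), (j, a + 1))) ` {1..<p j} \<union> (\<Union>i\<in>{1..<j}. cross i j p)"
    using assms new_split by auto
  have fc: "\<And>i. finite (cross i j p)" unfolding cross_def by auto
  have cU: "card (\<Union>i\<in>{1..<j}. cross i j p) = (\<Sum>i\<in>{1..<j}. card (cross i j p))"
    by (rule card_UN_disjoint) (auto simp: fc cross_def)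
  have "card (new_edges j p) = card ((\<lambda>a. ((j, a), (j, a + 1))) ` {1..<p j}) + card (\<Union>i\<in>{1..<j}. cross i j p)"
    unfolding ns by (rule card_Un_disjoint) (auto simp: fc cross_def)
  also have "card ((\<lambda>a. ((j, a), (j, a + 1))) ` {1..<p j}) = p j - 1"
    by (subst card_image) (auto simp: inj_on_def)
  also have "card (\<Union>i\<in>{1..<j}. cross i j p) = (\<Sum>i\<in>{1..<j}. p i + p j - 1)"
    unfolding cU using assms card_cross by (intro sum.cong) auto
  finally show ?thesis .
qed

lemma finite_V: "finite (gn_vertices k p)"
proof -
  have "gn_vertices k p = Sigma {1..k} (\<lambda>i. {1..p i})" unfolding gn_vertices_def by auto
  then show ?thesis by simp
qed

lemma dir_sub:
  assumes m: "\<forall>i\<in>{1..k}. \<forall>j\<in>{1..k}. i \<le> j \<longrightarrow> p i \<le> p j" and "\<forall>i\<in>{1..k}. p i \<ge> 1"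
  shows "gn_dir k p \<subseteq> gn_vertices k p \<times> gn_vertices k p"
proof
  fix e assume "e \<in> gn_dir k p"
  then consider
      (a) i a where "e = ((i, a), (i, a + 1))" "1 \<le> i" "i \<le> k" "1 \<le> a" "a < p i"
    | (b) i j a where "e = ((i, a), (j, a))" "1 \<le> i" "i < j" "j \<le> k" "1 \<le> a" "a < p i"
    | (c) i j a where "e = ((i, a + 1), (j, a))" "1 \<le> i" "i < j" "j \<le> k" "1 \<le> a" "a < p i"
    | (d) i j a where "e = ((i, p i), (j, a))" "1 \<le> i" "i < j" "j \<le> k" "p i \<le> a" "a \<le> p j"
    unfolding gn_dir_def by blast
  then show "e \<in> gn_vertices k p \<times> gn_vertices k p"
  proof cases
    case a then show ?thesis unfolding gn_vertices_def by auto
  next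
    case b then have "p i \<le> p j" using m by auto
    then show ?thesis using b unfolding gn_vertices_def by auto
  next
    case c then have "p i \<le> p j" using m by auto
    then show ?thesis using c unfolding gn_vertices_def by auto
  next
    case d then have "p i \<ge> 1" using assms(2) by auto
    then show ?thesis using d unfolding gn_vertices_def by auto
  qed
qed



lemma dir_cases:
  assumes "e \<in> gn_dir k p"
  obtains
      (a) i a where "e = ((i, a), (i, a + 1))" "1 \<le> i" "i \<le> k" "1 \<le> a" "a < p i"
    | (b) i j a where "e = ((i, a), (j, a))" "1 \<le> i" "i < j" "j \<le> k" "1 \<le> a" "a < p i"
    | (c) i j a where "e = ((i, a + 1), (j, a))" "1 \<le> i" "i < j" "j \<le> k" "1 \<le> a" "a < p i"
    | (d) i j a where "e = ((i, p i), (j, a))" "1 \<le> i" "i < j" "j \<le> k" "p i \<le> a" "a \<le> p j"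
  using assms unfolding gn_dir_def by blast

lemma finite_dir: "finite (gn_dir k p)"
proof -
  define M where "M = Max (p ` {1..k})"
  have pM: "\<And>i. 1 \<le> i \<Longrightarrow> i \<le> k \<Longrightarrow> p i \<le> M" unfolding M_def by simp
  let ?S = "{1..k} \<times> {..Suc M}"
  have "gn_dir k p \<subseteq> ?S \<times> ?S"
  proof
    fix e assume e: "e \<in> gn_dir k p"
    then show "e \<in> ?S \<times> ?S"
    proof (cases rule: dir_cases)
      case (a i a) then show ?thesis using pM[of i] by auto
    next
      case (b i j a) then show ?thesis using pM[of i] by auto
    next
      case (c i j a) then show ?thesis using pM[of i] by auto
    next
      case (d i j a) then show ?thesis using pM[of i] pM[of j] by auto
    qed
  qed
  then show ?thesis by (rule finite_subset) auto
qed

lemma count: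
  assumes "\<forall>i\<in>{1..k}. 1 \<le> p i" "\<forall>i\<in>{1..k}. \<forall>j\<in>{1..k}. i \<le> j \<longrightarrow> p i \<le> p j"
  shows "int (card (gn_dir k p)) = int k * int (\<Sum>i=1..k. p i) - int (Suc k choose 2)"
  using assms
proof (induction k)
  case 0
  have "gn_dir 0 p = {}" unfolding gn_dir_def by auto
  then show ?case by simp
next
  case (Suc k)
  have IH: "int (card (gn_dir k p)) = int k * int (\<Sum>i=1..k. p i) - int (Suc k choose 2)"
    using Suc.IH Suc.prems by auto
  have a: "\<forall>i\<in>{1..<Suc k}. 1 \<le> p i \<and> p i \<le> p (Suc k)" using Suc.prems by auto
  have cn: "card (new_edges (Suc k) p) = (p (Suc k) - 1) + (\<Sum>i\<in>{1..<Suc k}. p i + p (Suc k) - 1)"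
    using card_new[OF a] .
  have "int (\<Sum>i\<in>{1..<Suc k}. p i + p (Suc k) - 1) = (\<Sum>i\<in>{1..<Suc k}. int (p i) + int (p (Suc k)) - 1)"
    unfolding of_nat_sum using a by (intro sum.cong) (auto simp: of_nat_diff)
  also have "\<dots> = int (\<Sum>i=1..k. p i) + int k * int (p (Suc k)) - int k"
    by (simp add: sum.distrib sum_subtractf atLeastLessThanSuc_atLeastAtMost)
  finally have s: "int (\<Sum>i\<in>{1..<Suc k}. p i + p (Suc k) - 1) = int (\<Sum>i=1..k. p i) + int k * int (p (Suc k)) - int k" .
  have p1: "int (p (Suc k) - 1) = int (p (Suc k)) - 1" using Suc.prems by (simp add: of_nat_diff)
  have c: "card (gn_dir (Suc k) p) = card (gn_dir k p) + card (new_edges (Suc k) p)"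
    unfolding dir_Suc using dir_new_disj finite_dir
    by (metis card_Un_disjoint dir_Suc finite_Un)
  have ch: "Suc (Suc k) choose 2 = Suc k + (Suc k choose 2)" by (simp add: numeral_2_eq_2)
  have sk: "(\<Sum>i=1..Suc k. p i) = (\<Sum>i=1..k. p i) + p (Suc k)" by simp
  show ?case unfolding c ch sk using IH cn s p1 by (simp add: algebra_simps)
qed



lemma geom:
  assumes m: "\<forall>i\<in>{1..k}. \<forall>j\<in>{1..k}. i \<le> j \<longrightarrow> p i \<le> p j" and pos: "\<forall>i\<in>{1..k}. p i \<ge> 1"
  shows "geometry (gn_vertices k p) (gn_adj k p) (gn_inputs k) (gn_outputs k p)"
proof -
  have s: "gn_adj k p \<subseteq> gn_vertices k p \<times> gn_vertices k p"
    using dir_sub[OF m pos] unfolding gn_adj_def by auto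
  have sy: "sym (gn_adj k p)" unfolding gn_adj_def sym_def by auto
  have ir: "\<forall>x. (x,x) \<notin> gn_adj k p" unfolding gn_adj_def using dir_lex by blast
  have i: "gn_inputs k \<subseteq> gn_vertices k p" using pos unfolding gn_inputs_def gn_vertices_def by auto
  have o: "gn_outputs k p \<subseteq> gn_vertices k p" using pos unfolding gn_outputs_def gn_vertices_def by auto
  show ?thesis unfolding geometry_def simple_graph_def using finite_V s sy ir i o by blast
qed

definition gn_R :: "nat \<Rightarrow> (nat \<Rightarrow> nat) \<Rightarrow> ((nat \<times> nat) \<times> (nat \<times> nat)) set" where
  "gn_R k p = {((i,a),(j,b)). (i,a) \<in> gn_vertices k p \<and> (j,b) \<in> gn_vertices k p \<and>
      ((i,a) = (j,b) \<or> (a < p i \<and> b = p j) \<or> (a < p i \<and> b < p j \<and> (a < b \<or> (a = b \<and> i < j))))}"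

lemma R_po: "partial_order_on (gn_vertices k p) (gn_R k p)"
proof -
  have "refl_on (gn_vertices k p) (gn_R k p)" unfolding refl_on_def gn_R_def by auto
  moreover have "trans (gn_R k p)" unfolding trans_def gn_R_def by auto
  moreover have "antisym (gn_R k p)" unfolding antisym_def gn_R_def by auto
  moreover have "gn_R k p \<subseteq> gn_vertices k p \<times> gn_vertices k p" unfolding gn_R_def by auto
  ultimately show ?thesis unfolding partial_order_on_def preorder_on_def by blast
qed

lemma flow:
  assumes m: "\<forall>i\<in>{1..k}. \<forall>j\<in>{1..k}. i \<le> j \<longrightarrow> p i \<le> p j" and pos: "\<forall>i\<in>{1..k}. p i \<ge> 1"
  shows "is_causal_flow (gn_vertices k p) (gn_adj k p) (gn_inputs k) (gn_outputs k p) (\<lambda>(i,a). (i, a+1)) (gn_R k p)"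
  unfolding is_causal_flow_def
proof (intro conjI R_po; intro ballI)
  fix x assume x: "x \<in> gn_vertices k p - gn_outputs k p"
  then obtain i a where ia: "x = (i,a)" "1 \<le> i" "i \<le> k" "1 \<le> a" "a < p i"
    unfolding gn_vertices_def gn_outputs_def by force
  show "(case x of (i, a) \<Rightarrow> (i, a + 1)) \<in> gn_vertices k p - gn_inputs k"
    using ia unfolding gn_vertices_def gn_inputs_def by auto
next
  fix x assume x: "x \<in> gn_vertices k p - gn_outputs k p"
  then obtain i a where ia: "x = (i,a)" "1 \<le> i" "i \<le> k" "1 \<le> a" "a < p i"
    unfolding gn_vertices_def gn_outputs_def by force
  fix y assume y: "y \<in> gn_vertices k p"
  show "(x, case x of (i, a) \<Rightarrow> (i, a + 1)) \<in> gn_adj k p \<and>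
         (x, case x of (i, a) \<Rightarrow> (i, a + 1)) \<in> gn_R k p \<and>
         ((y, case x of (i, a) \<Rightarrow> (i, a + 1)) \<in> gn_adj k p \<longrightarrow> (x, y) \<in> gn_R k p)"
  proof (intro conjI impI)
    show "(x, case x of (i, a) \<Rightarrow> (i, a + 1)) \<in> gn_adj k p"
      using ia unfolding gn_adj_def gn_dir_def by auto
    show "(x, case x of (i, a) \<Rightarrow> (i, a + 1)) \<in> gn_R k p"
      using ia unfolding gn_R_def gn_vertices_def by auto
    assume e: "(y, case x of (i, a) \<Rightarrow> (i, a + 1)) \<in> gn_adj k p"
    obtain j b where yjb: "y = (j,b)" "1 \<le> j" "j \<le> k" "1 \<le> b" "b \<le> p j"
      using y unfolding gn_vertices_def by force
    have xV: "x \<in> gn_vertices k p" using x by auto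
    have "(y, (i, a+1)) \<in> gn_dir k p \<or> ((i, a+1), y) \<in> gn_dir k p"
      using e ia unfolding gn_adj_def by auto
    then have key: "(j,b) = (i,a) \<or> b = p j \<or> (b < p j \<and> (a < b \<or> (a = b \<and> i < j)))"
    proof
      assume "(y, (i, a+1)) \<in> gn_dir k p"
      then show ?thesis
      proof (cases rule: dir_cases)
        case (a i' a') then show ?thesis using ia yjb by auto
      next
        case (b i' j' a') then show ?thesis using ia yjb by auto
      next
        case (c i' j' a') then show ?thesis using ia yjb by auto
      next
        case (d i' j' a') then show ?thesis using ia yjb by auto
      qed
    next
      assume "((i, a+1), y) \<in> gn_dir k p"
      then show ?thesis
      proof (cases rule: dir_cases)
        case (a i' a') then show ?thesis using ia yjb by auto
      next
        case (b i' j' a') then show ?thesis using ia yjb by auto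
      next
        case (c i' j' a') then show ?thesis using ia yjb by auto
      next
        case (d i' j' a') then show ?thesis using ia yjb by auto
      qed
    qed
    show "(x, y) \<in> gn_R k p"
      using key ia yjb xV y unfolding gn_R_def by auto
  qed
qed


theorem theorem2:
  shows "(\<forall>(V :: 'a set) E Inp Out.
            geometry V E Inp Out \<and> has_causal_flow V E Inp Out \<longrightarrow>
            int (card (edge_set E)) \<le> int (card Out) * int (card V) - int (Suc (card Out) choose 2))
       \<and> (\<forall>(n :: nat) (k :: nat) (p :: nat \<Rightarrow> nat).
            k \<ge> 1 \<and> n \<ge> k \<and> (\<forall>i \<in> {1..k}. p i \<ge> 1) \<and>
            (\<forall>i \<in> {1..k}. \<forall>j \<in> {1..k}. i \<le> j \<longrightarrow> p i \<le> p j) \<and>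
            (\<Sum>i = 1..k. p i) = n \<longrightarrow>
              geometry (gn_vertices k p) (gn_adj k p) (gn_inputs k) (gn_outputs k p) \<and>
              has_causal_flow (gn_vertices k p) (gn_adj k p) (gn_inputs k) (gn_outputs k p) \<and>
              int (card (edge_set (gn_adj k p))) = int k * int n - int (Suc k choose 2))"
proof (intro conjI allI impI)
  fix V :: "'a set" and E Inp Out
  assume h: "geometry V E Inp Out \<and> has_causal_flow V E Inp Out"
  then obtain f R where fR: "is_causal_flow V E Inp Out f R" unfolding has_causal_flow_def by blast
  have g: "finite V" "E \<subseteq> V \<times> V" "sym E" "\<forall>x. (x,x) \<notin> E" "Out \<subseteq> V"
    using h unfolding geometry_def simple_graph_def by auto
  have po: "trans R" "antisym R" using fR partial_order_onD unfolding is_causal_flow_def by blast+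
  have hyp: "\<forall>x\<in>V-Out. f x \<in> V \<and> (x, f x) \<in> E \<and> (x, f x) \<in> R \<and> (\<forall>y\<in>V. (y, f x) \<in> E \<longrightarrow> (x,y)\<in>R)"
    using fR unfolding is_causal_flow_def by blast
  show "int (card (edge_set E)) \<le> int (card Out) * int (card V) - int (Suc (card Out) choose 2)"
    by (rule part1[OF g po hyp])
next
  fix n k :: nat and p :: "nat \<Rightarrow> nat"
  assume h: "k \<ge> 1 \<and> n \<ge> k \<and> (\<forall>i \<in> {1..k}. p i \<ge> 1) \<and>
            (\<forall>i \<in> {1..k}. \<forall>j \<in> {1..k}. i \<le> j \<longrightarrow> p i \<le> p j) \<and>
            (\<Sum>i = 1..k. p i) = n"
  then have pos: "\<forall>i \<in> {1..k}. p i \<ge> 1" and m: "\<forall>i \<in> {1..k}. \<forall>j \<in> {1..k}. i \<le> j \<longrightarrow> p i \<le> p j"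
    and sn: "(\<Sum>i = 1..k. p i) = n" by auto
  show "geometry (gn_vertices k p) (gn_adj k p) (gn_inputs k) (gn_outputs k p)" by (rule geom[OF m pos])
  show "has_causal_flow (gn_vertices k p) (gn_adj k p) (gn_inputs k) (gn_outputs k p)"
    unfolding has_causal_flow_def using flow[OF m pos] by blast
  show "int (card (edge_set (gn_adj k p))) = int k * int n - int (Suc k choose 2)"
    unfolding card_edge_adj sn[symmetric] by (rule count[OF pos m])
qed

end
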